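(* Let $E$ be a Euclidean space, $0<\varepsilon\le1$, and $g\in\mathrm{End}(E)$ with $g\neq0$, $\sigma(g)\le\varepsilon^2/8$ and $g\,\mathbb{A}^\varepsilon\,g$. Then $g$ is proximal (i.e. $\rho_1(g)>\rho_2(g)$) and $$\rho_1(g)\ge\frac\varepsilon2\|g\|,\qquad\frac{\rho_2(g)}{\rho_1(g)}\le\frac{4\sigma(g)}{\varepsilon^2},\qquad\forall u\in U^1(g)\setminus\{0\},\ \mathrm{dist}([u],E^+(g))\le\frac{2\sigma(g)}{\varepsilon}.$$
   Context: $E=\mathbb{R}^d$ with Euclidean norm, operator norm on $\mathrm{End}(E)$. $g\,\mathbb{A}^\varepsilon\,h$ means $\|gh\|\ge\varepsilon\|g\|\|h\|$. $\sigma(g)=\|g\wedge g\|/\|g\|^2=s_2(g)/s_1(g)$. $\rho_1(g)\ge\rho_2(g)\ge\cdots$ are the moduli of the eigenvalues; when $\rho_1>\rho_2$, $E^+(g)$ is the eigenline of the top eigenvalue. $V^1(g)=\{x:\|gx\|=\|g\|\|x\|\}$ and $U^1(g)=g(V^1(g))$. $\mathrm{dist}([x],[y])=\|x\wedge y\|/(\|x\|\|y\|)$ on projective space. *)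

theory Defs
  imports "HOL-Analysis.Analysis" "HOL-Computational_Algebra.Polynomial"
    "HOL-Computational_Algebra.Fundamental_Theorem_Algebra"
begin

text \<open>E = real^'n (Euclidean), End(E) = real^'n^'n acting by matrix-vector product.\<close>

definition opnorm :: "real^'n^'n \<Rightarrow> real" where
  "opnorm g = onorm (\<lambda>x. g *v x)"

definition aligned :: "real^'n^'n \<Rightarrow> real \<Rightarrow> real^'n^'n \<Rightarrow> bool" where
  "aligned g eps h \<longleftrightarrow> opnorm (g ** h) \<ge> eps * opnorm g * opnorm h"

text \<open>Second exterior power: Lambda^2 E is realised as antisymmetric matrices W,
 x\<and>y = x y^T - y x^T, and (g\<and>g) W = g W g^T. The basis e_i\<and>e_j (i<j) is
 orthonormal, so the Euclidean norm on Lambda^2 E is (Frobenius norm)/sqrt 2.\<close>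
definition vwedge :: "real^'n \<Rightarrow> real^'n \<Rightarrow> real^'n^'n" where
  "vwedge x y = (\<chi> i j. x$i * y$j - x$j * y$i)"

definition wnorm :: "real^'n^'n \<Rightarrow> real" where
  "wnorm W = norm W / sqrt 2"

definition ext2_opnorm :: "real^'n^'n \<Rightarrow> real" where
  "ext2_opnorm g = Sup (insert 0 {wnorm (g ** W ** transpose g) / wnorm W | W.
       transpose W = - W \<and> W \<noteq> 0})"

definition sigma :: "real^'n^'n \<Rightarrow> real" where
  "sigma g = ext2_opnorm g / (opnorm g)\<^sup>2"

text \<open>Characteristic polynomial and eigenvalue moduli (with algebraic multiplicity),
 rho g k = k-th largest modulus (k >= 1), 0 if k > dim.\<close>
definition charpoly :: "real^'n^'n \<Rightarrow> real poly" where
  "charpoly g = det (\<chi> i j. (if i = j then [:0, 1:] else 0) - [:g$i$j:])"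

definition eig_moduli :: "real^'n^'n \<Rightarrow> real list" where
  "eig_moduli g = rev (sorted_list_of_multiset
      (image_mset cmod (proots (map_poly complex_of_real (charpoly g)))))"

definition rho :: "real^'n^'n \<Rightarrow> nat \<Rightarrow> real" where
  "rho g k = (if 1 \<le> k \<and> k \<le> length (eig_moduli g) then eig_moduli g ! (k - 1) else 0)"

definition proximal :: "real^'n^'n \<Rightarrow> bool" where
  "proximal g \<longleftrightarrow> rho g 1 > rho g 2"

definition Eplus :: "real^'n^'n \<Rightarrow> (real^'n) set" where
  "Eplus g = {v. \<exists>c::real. \<bar>c\<bar> = rho g 1 \<and> g *v v = c *\<^sub>R v}"

definition V1 :: "real^'n^'n \<Rightarrow> (real^'n) set" where
  "V1 g = {x. norm (g *v x) = opnorm g * norm x}"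

definition U1 :: "real^'n^'n \<Rightarrow> (real^'n) set" where
  "U1 g = (\<lambda>x. g *v x) ` V1 g"

definition pdist :: "real^'n \<Rightarrow> real^'n \<Rightarrow> real" where
  "pdist x y = wnorm (vwedge x y) / (norm x * norm y)"

end

theory Submission
  imports Defs
begin

lemma vwedge_sym: "transpose (vwedge a b) = - vwedge a b"
  by (simp add: vwedge_def transpose_def vec_eq_iff)

lemma vwedge_conj: "g ** vwedge a b ** transpose g = vwedge (g *v a) (g *v b)"
proof -
  have "(g ** vwedge a b ** transpose g)$i$j = vwedge (g *v a) (g *v b) $i$j" for i j
  proof -
    have "(g ** vwedge a b ** transpose g)$i$j =
      (\<Sum>k\<in>UNIV. (\<Sum>l\<in>UNIV. g$i$l * (a$l*b$k - a$k*b$l)) * g$j$k)"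
      by (simp add: matrix_matrix_mult_def transpose_def vwedge_def)
    also have "\<dots> = (\<Sum>k\<in>UNIV. \<Sum>l\<in>UNIV. (g$i$l*a$l)*(g$j$k*b$k) - (g$i$l*b$l)*(g$j$k*a$k))"
      by (intro sum.cong refl) (simp add: sum_distrib_left sum_distrib_right algebra_simps)
    also have "\<dots> = (\<Sum>l\<in>UNIV. \<Sum>k\<in>UNIV. (g$i$l*a$l)*(g$j$k*b$k) - (g$i$l*b$l)*(g$j$k*a$k))"
      by (rule sum.swap)
    also have "\<dots> = (\<Sum>l\<in>UNIV. g$i$l*a$l) * (\<Sum>k\<in>UNIV. g$j$k*b$k)
        - (\<Sum>l\<in>UNIV. g$i$l*b$l) * (\<Sum>k\<in>UNIV. g$j$k*a$k)"
      by (simp add: sum_product sum_subtractf)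
    also have "\<dots> = vwedge (g *v a) (g *v b) $i$j"
      by (simp add: vwedge_def matrix_vector_mult_def mult.commute)
    finally show ?thesis .
  qed
  then show ?thesis by (simp add: vec_eq_iff)
qed

lemma norm_sq_mat: "(norm (W::real^'n^'n))^2 = (\<Sum>i\<in>UNIV. \<Sum>j\<in>UNIV. (W$i$j)^2)"
proof -
  have "(norm W)^2 = W \<bullet> W" by (rule power2_norm_eq_inner)
  then show ?thesis by (simp add: inner_vec_def power2_eq_square)
qed

lemma norm_sq_vec: "(norm (a::real^'n))^2 = (\<Sum>i\<in>UNIV. (a$i)^2)"
proof -
  have "(norm a)^2 = a \<bullet> a" by (rule power2_norm_eq_inner)
  then show ?thesis by (simp add: inner_vec_def power2_eq_square)
qed

lemma vwedge_norm_sq: "(norm (vwedge a b))^2 = 2 * ((norm a)^2 * (norm b)^2 - (a \<bullet> b)^2)"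
proof -
  have "(norm (vwedge a b))^2 = (\<Sum>i\<in>UNIV. \<Sum>j\<in>UNIV. (a$i*b$j - a$j*b$i)^2)"
    by (simp add: norm_sq_mat vwedge_def)
  also have "\<dots> = (\<Sum>i\<in>UNIV. \<Sum>j\<in>UNIV. (a$i)^2*(b$j)^2 + (a$j)^2*(b$i)^2 - 2*((a$i*b$i)*(a$j*b$j)))"
    by (intro sum.cong refl) (simp add: power2_eq_square algebra_simps)
  also have "\<dots> = 2 * ((\<Sum>i\<in>UNIV. (a$i)^2) * (\<Sum>j\<in>UNIV. (b$j)^2) - (\<Sum>i\<in>UNIV. a$i*b$i)^2)"
  proof -
    define A where "A = (\<lambda>i. (a$i)^2)"
    define B where "B = (\<lambda>i. (b$i)^2)"
    define C where "C = (\<lambda>i. a$i*b$i)"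
    have e1: "(\<Sum>i\<in>UNIV. \<Sum>j\<in>UNIV. A i * B j) = sum A UNIV * sum B UNIV"
      by (simp add: sum_product)
    have e2: "(\<Sum>i\<in>UNIV. \<Sum>j\<in>UNIV. A j * B i) = sum A UNIV * sum B UNIV"
      using sum_product[of B UNIV A UNIV] by (simp add: mult.commute)
    have e3: "(\<Sum>i\<in>UNIV. \<Sum>j\<in>UNIV. C i * C j) = (sum C UNIV)^2"
      by (simp add: sum_product power2_eq_square)
    have "(\<Sum>i\<in>UNIV. \<Sum>j\<in>UNIV. A i * B j + A j * B i - 2 * (C i * C j))
       = (\<Sum>i\<in>UNIV. \<Sum>j\<in>UNIV. A i * B j) + (\<Sum>i\<in>UNIV. \<Sum>j\<in>UNIV. A j * B i)
         - 2 * (\<Sum>i\<in>UNIV. \<Sum>j\<in>UNIV. C i * C j)"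
      by (simp only: sum.distrib sum_subtractf sum_distrib_left)
    then show ?thesis unfolding e1 e2 e3 by (simp add: A_def B_def C_def algebra_simps)
  qed
  also have "\<dots> = 2 * ((norm a)^2 * (norm b)^2 - (a \<bullet> b)^2)"
    by (simp only: norm_sq_vec inner_vec_def inner_real_def)
  finally show ?thesis .
qed

lemma wnorm_vwedge: "wnorm (vwedge a b) = sqrt ((norm a)^2 * (norm b)^2 - (a \<bullet> b)^2)"
proof -
  have "norm (vwedge a b) = sqrt (2 * ((norm a)^2 * (norm b)^2 - (a \<bullet> b)^2))"
    by (metis norm_ge_zero real_sqrt_unique vwedge_norm_sq)
  also have "\<dots> = sqrt 2 * sqrt ((norm a)^2 * (norm b)^2 - (a \<bullet> b)^2)"
    by (rule real_sqrt_mult)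
  finally show ?thesis by (simp add: wnorm_def)
qed

lemma opnorm_bound: "norm (g *v x) \<le> opnorm g * norm x"
  unfolding opnorm_def by (rule onorm) simp

lemma opnorm_nonneg: "0 \<le> opnorm g"
  unfolding opnorm_def by (rule onorm_pos_le) simp

lemma opnorm_le: "(\<And>x. norm (g *v x) \<le> b * norm x) \<Longrightarrow> opnorm g \<le> b"
  unfolding opnorm_def by (rule onorm_le)

lemma opnorm_pos: "(g::real^'n^'n) \<noteq> 0 \<Longrightarrow> 0 < opnorm g"
  unfolding opnorm_def
  by (subst onorm_pos_lt) (auto simp: matrix_eq)

lemma opnorm_attained:
  fixes g :: "real^'n^'n"
  shows "\<exists>v. norm v = 1 \<and> norm (g *v v) = opnorm g"
proof -
  have ne: "sphere (0::real^'n) 1 \<noteq> {}"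
    using norm_axis_1 by (metis mem_sphere_0 empty_iff)
  have cont: "continuous_on (sphere (0::real^'n) 1) (\<lambda>x. norm (g *v x))"
    by (intro continuous_intros linear_continuous_on) simp
  obtain v where v: "v \<in> sphere 0 1" and vmax: "\<And>y. y \<in> sphere 0 1 \<Longrightarrow> norm (g *v y) \<le> norm (g *v v)"
    using continuous_attains_sup[OF compact_sphere ne cont] by blast
  have "opnorm g \<le> norm (g *v v)"
  proof (rule opnorm_le)
    fix x :: "real^'n"
    show "norm (g *v x) \<le> norm (g *v v) * norm x"
    proof (cases "x = 0")
      case False
      have "norm (g *v (inverse (norm x) *\<^sub>R x)) \<le> norm (g *v v)"
        using False by (intro vmax) simp
      then show ?thesis using False
        by (simp add: matrix_vector_mult_scaleR field_simps)
    qed simp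
  qed
  moreover have "norm (g *v v) \<le> opnorm g"
    using opnorm_bound[of g v] v by simp
  ultimately show ?thesis using v by (intro exI[of _ v]) simp
qed

lemma norm_add_sq: "(norm (a + b::real^'n))^2 = (norm a)^2 + 2 * (a \<bullet> b) + (norm b)^2"
  by (simp add: power2_norm_eq_inner inner_add_left inner_add_right inner_commute)

lemma topvec_orth:
  fixes g :: "real^'n^'n"
  assumes v: "norm v = 1" "norm (g *v v) = opnorm g" and wv: "w \<bullet> v = 0"
  shows "(g *v v) \<bullet> (g *v w) = 0"
proof -
  define s where "s = opnorm g"
  define p where "p = (g *v v) \<bullet> (g *v w)"
  define C where "C = s^2 * (norm w)^2"
  have C0: "0 \<le> C" unfolding C_def by simp
  have key: "2 * t * p \<le> t^2 * C" for t
  proof -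
    have "norm (g *v (v + t *\<^sub>R w)) \<le> s * norm (v + t *\<^sub>R w)"
      unfolding s_def by (rule opnorm_bound)
    hence "(norm (g *v (v + t *\<^sub>R w)))^2 \<le> (s * norm (v + t *\<^sub>R w))^2"
      by (intro power_mono) auto
    moreover have "(norm (g *v (v + t *\<^sub>R w)))^2 = s^2 + 2*t*p + t^2 * (norm (g *v w))^2"
      using v by (simp add: matrix_vector_right_distrib matrix_vector_mult_scaleR norm_add_sq
          p_def s_def power_mult_distrib)
    moreover have "(norm (v + t *\<^sub>R w))^2 = 1 + t^2 * (norm w)^2"
      using v wv by (simp add: norm_add_sq inner_commute power_mult_distrib)
    ultimately have "s^2 + 2*t*p + t^2 * (norm (g *v w))^2 \<le> s^2 * (1 + t^2 * (norm w)^2)"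
      by (simp add: power_mult_distrib)
    hence "2*t*p + t^2 * (norm (g *v w))^2 \<le> t^2 * C" by (simp add: C_def algebra_simps)
    moreover have "0 \<le> t^2 * (norm (g *v w))^2" by simp
    ultimately show ?thesis by linarith
  qed
  have "p = 0"
  proof (rule ccontr)
    assume "p \<noteq> 0"
    hence pp: "0 < p^2" by simp
    define t where "t = p / (C+1)"
    have tC: "t * (C+1) = p" unfolding t_def using C0 by simp
    have "2 * t * p \<le> t^2 * C" by (rule key)
    hence "(2 * t * p) * (C+1)^2 \<le> (t^2 * C) * (C+1)^2"
      by (rule mult_right_mono) simp
    moreover have "(2 * t * p) * (C+1)^2 = 2 * p^2 * (C+1)"
    proof -
      have "(2 * t * p) * (C+1)^2 = 2 * p * (C+1) * (t * (C+1))" by (simp add: power2_eq_square algebra_simps)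
      also have "\<dots> = 2 * p^2 * (C+1)" by (simp add: tC power2_eq_square)
      finally show ?thesis .
    qed
    moreover have "(t^2 * C) * (C+1)^2 = p^2 * C"
    proof -
      have "(t^2 * C) * (C+1)^2 = C * (t * (C+1))^2" by (simp add: power2_eq_square algebra_simps)
      also have "\<dots> = p^2 * C" by (simp add: tC)
      finally show ?thesis .
    qed
    ultimately have "2 * p^2 * (C+1) \<le> p^2 * C" by simp
    moreover have "2 * p^2 * (C+1) = 2 * (p^2 * C) + 2 * p^2" by (simp add: algebra_simps)
    moreover have "0 \<le> p^2 * C" using C0 by simp
    ultimately show False using pp by linarith
  qed
  thus ?thesis unfolding p_def .
qed

lemma linear_conj: "linear (\<lambda>W::real^'n^'n. (g::real^'n^'n) ** W ** transpose g)"
proof (rule linearI)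
  fix A B :: "real^'n^'n" and c :: real
  have r: "(X + Y) ** Z = X ** Z + Y ** Z" for X Y Z :: "real^'n^'n"
    by (vector matrix_matrix_mult_def sum.distrib distrib_right)
  show "g ** (A + B) ** transpose g = g ** A ** transpose g + g ** B ** transpose g"
    by (simp only: matrix_add_ldistrib r)
  show "g ** (c *\<^sub>R A) ** transpose g = c *\<^sub>R (g ** A ** transpose g)"
    by (simp add: matrix_scalar_ac scalar_matrix_assoc)
qed

lemma ext2_upper:
  fixes g :: "real^'n^'n"
  assumes "transpose W = - W" "W \<noteq> 0"
  shows "wnorm (g ** W ** transpose g) / wnorm W \<le> ext2_opnorm g"
proof -
  obtain K where K: "\<And>W. norm (g ** W ** transpose g) \<le> norm W * K"
    using bounded_linear.bounded[OF linear_conj[of g, unfolded linear_conv_bounded_linear]] by blast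
  have "bdd_above (insert 0 {wnorm (g ** W ** transpose g) / wnorm W | W.
       transpose W = - W \<and> W \<noteq> 0})"
  proof (rule bdd_aboveI[of _ "max 0 K"])
    fix y assume "y \<in> insert 0 {wnorm (g ** W ** transpose g) / wnorm W | W. transpose W = - W \<and> W \<noteq> 0}"
    then consider "y = 0" | W where "y = wnorm (g ** W ** transpose g) / wnorm W" "W \<noteq> 0" by blast
    then show "y \<le> max 0 K"
    proof cases
      case 2
      have "y = norm (g ** W ** transpose g) / norm W" using 2 by (simp add: wnorm_def)
      also have "\<dots> \<le> K" using K[of W] 2 by (simp add: divide_le_eq mult.commute)
      finally show ?thesis by simp
    qed simp
  qed
  then show ?thesis unfolding ext2_opnorm_def
    using assms by (intro cSup_upper) blast+
qed

lemma ext2_nonneg: "0 \<le> ext2_opnorm (g::real^'n^'n)"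
proof -
  obtain K where K: "\<And>W. norm (g ** W ** transpose g) \<le> norm W * K"
    using bounded_linear.bounded[OF linear_conj[of g, unfolded linear_conv_bounded_linear]] by blast
  have "bdd_above (insert 0 {wnorm (g ** W ** transpose g) / wnorm W | W.
       transpose W = - W \<and> W \<noteq> 0})"
  proof (rule bdd_aboveI[of _ "max 0 K"])
    fix y assume "y \<in> insert 0 {wnorm (g ** W ** transpose g) / wnorm W | W. transpose W = - W \<and> W \<noteq> 0}"
    then consider "y = 0" | W where "y = wnorm (g ** W ** transpose g) / wnorm W" "W \<noteq> 0" by blast
    then show "y \<le> max 0 K"
    proof cases
      case 2
      have "y = norm (g ** W ** transpose g) / norm W" using 2 by (simp add: wnorm_def)
      also have "\<dots> \<le> K" using K[of W] 2 by (simp add: divide_le_eq mult.commute)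
      finally show ?thesis by simp
    qed simp
  qed
  then show ?thesis unfolding ext2_opnorm_def
    by (intro cSup_upper) simp_all
qed

locale topsv =
  fixes g :: "real^'n^'n" and v :: "real^'n"
  assumes gnz: "g \<noteq> 0" and v1: "norm v = 1" and vmax: "norm (g *v v) = opnorm g"
begin

definition "s = opnorm g"
definition "u = (1 / s) *\<^sub>R (g *v v)"
definition "sg = sigma g"

lemma s_pos: "0 < s" unfolding s_def using opnorm_pos[OF gnz] .

lemma gv: "g *v v = s *\<^sub>R u" using s_pos by (simp add: u_def)

lemma u1: "norm u = 1" using s_pos vmax by (simp add: u_def s_def)

lemma sg_nonneg: "0 \<le> sg" unfolding sg_def sigma_def using ext2_nonneg[of g] by simp

lemma ext2_eq: "ext2_opnorm g = sg * s^2" unfolding sg_def sigma_def s_def using s_pos[unfolded s_def] by simp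

lemma orth_u: "w \<bullet> v = 0 \<Longrightarrow> u \<bullet> (g *v w) = 0"
  using topvec_orth[OF v1 vmax, of w] by (simp add: u_def)

lemma small: assumes "w \<bullet> v = 0" shows "norm (g *v w) \<le> sg * s * norm w"
proof (cases "w = 0")
  case False
  define W where "W = vwedge v w"
  have wW: "wnorm W = norm w" using assms v1 by (simp add: W_def wnorm_vwedge inner_commute)
  have W0: "W \<noteq> 0" using wW False by (auto simp: wnorm_def)
  have gW: "wnorm (g ** W ** transpose g) = s * norm (g *v w)"
    using orth_u[OF assms] s_pos
    by (simp add: W_def vwedge_conj wnorm_vwedge gv u1 power_mult_distrib real_sqrt_mult)
  have "wnorm (g ** W ** transpose g) / wnorm W \<le> ext2_opnorm g"
    by (rule ext2_upper) (simp_all add: W_def vwedge_sym W0[unfolded W_def])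
  hence "s * norm (g *v w) / norm w \<le> sg * s^2" unfolding gW wW ext2_eq .
  hence "s * norm (g *v w) \<le> sg * s^2 * norm w" using False by (simp add: divide_le_eq)
  hence "s * norm (g *v w) \<le> s * (sg * s * norm w)" by (simp add: power2_eq_square algebra_simps)
  thus ?thesis using s_pos by simp
qed simp

definition "perp x = x - (v \<bullet> x) *\<^sub>R v"

lemma vv: "v \<bullet> v = 1" by (metis power2_norm_eq_inner v1 one_power2)

lemma perp_orth: "perp x \<bullet> v = 0"
  by (simp add: perp_def inner_diff_left inner_diff_right inner_commute vv)

lemma perp_norm_sq: "(norm (perp x))^2 = (norm x)^2 - (v \<bullet> x)^2"
proof -
  have "(norm (perp x))^2 = perp x \<bullet> perp x" by (rule power2_norm_eq_inner)
  also have "\<dots> = x \<bullet> x - 2 * (v \<bullet> x)^2 + (v \<bullet> x)^2 * (v \<bullet> v)"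
    by (simp add: perp_def inner_diff_left inner_diff_right inner_commute algebra_simps power2_eq_square)
  also have "\<dots> = (norm x)^2 - (v \<bullet> x)^2" by (simp add: vv power2_norm_eq_inner)
  finally show ?thesis .
qed

lemma perp_norm: "norm (perp x) \<le> norm x"
proof (rule power2_le_imp_le)
  show "(norm (perp x))^2 \<le> (norm x)^2" using perp_norm_sq[of x] by simp
qed simp

lemma decomp: "g *v x = (s * (v \<bullet> x)) *\<^sub>R u + g *v perp x"
  by (simp add: perp_def matrix_vector_mult_diff_distrib matrix_vector_mult_scaleR gv)

lemma decomp_orth: "u \<bullet> (g *v perp x) = 0"
  by (rule orth_u[OF perp_orth])

lemma decomp_small: "norm (g *v perp x) \<le> sg * s * norm (perp x)"
  by (rule small[OF perp_orth])

lemma norm_sum_orth_sq: "u \<bullet> w = 0 \<Longrightarrow> (norm (a *\<^sub>R u + w))^2 = a^2 * (norm u)^2 + (norm w)^2"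
  for u w :: "real^'n"
  by (simp add: norm_add_sq power_mult_distrib)

lemma gu_sq: "(norm (g *v u))^2 \<le> s^2 * ((v \<bullet> u)^2 + sg^2)"
proof -
  have "(norm (g *v u))^2 = (s * (v \<bullet> u))^2 + (norm (g *v perp u))^2"
    unfolding decomp[of u] by (subst norm_sum_orth_sq) (simp_all add: decomp_orth u1)
  also have "(norm (g *v perp u)) \<le> sg * s"
  proof -
    have "norm (g *v perp u) \<le> sg * s * norm (perp u)" by (rule decomp_small)
    also have "\<dots> \<le> sg * s * 1"
      using perp_norm[of u] u1 sg_nonneg s_pos by (intro mult_left_mono) simp_all
    finally show ?thesis by simp
  qed
  hence "(norm (g *v perp u))^2 \<le> (sg * s)^2" by (intro power_mono) simp_all
  finally show ?thesis by (simp add: power_mult_distrib algebra_simps)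
qed

lemma cs2: "(a*b + c*d)^2 \<le> (a^2 + c^2) * (b^2 + d^2)" for a b c d :: real
proof -
  have "(a*b + c*d)^2 + (a*d - c*b)^2 = (a^2 + c^2) * (b^2 + d^2)" by algebra
  moreover have "0 \<le> (a*d - c*b)^2" by simp
  ultimately show ?thesis by linarith
qed

lemma g2_bound: "(norm (g *v (g *v x)))^2 \<le> s^4 * ((v \<bullet> u)^2 + 2 * sg^2) * (norm x)^2"
proof -
  define p where "p = v \<bullet> x"
  define q where "q = norm (perp x)"
  define A where "A = norm (g *v u)"
  have "g *v (g *v x) = (s * p) *\<^sub>R (g *v u) + g *v (g *v perp x)"
    by (subst decomp) (simp add: p_def matrix_vector_right_distrib matrix_vector_mult_scaleR)
  hence "norm (g *v (g *v x)) \<le> \<bar>s * p\<bar> * A + norm (g *v (g *v perp x))"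
    by (metis A_def norm_scaleR norm_triangle_ineq)
  also have "norm (g *v (g *v perp x)) \<le> s * (sg * s * q)"
  proof -
    have "norm (g *v (g *v perp x)) \<le> s * norm (g *v perp x)" using opnorm_bound s_def by metis
    also have "\<dots> \<le> s * (sg * s * q)" using decomp_small[of x] s_pos q_def by simp
    finally show ?thesis .
  qed
  finally have n: "norm (g *v (g *v x)) \<le> \<bar>p\<bar> * (s * A) + q * (s^2 * sg)"
    using s_pos by (simp add: abs_mult power2_eq_square algebra_simps)
  have "(norm (g *v (g *v x)))^2 \<le> (\<bar>p\<bar> * (s * A) + q * (s^2 * sg))^2"
    by (rule power_mono[OF n]) simp
  also have "\<dots> \<le> (\<bar>p\<bar>^2 + q^2) * ((s * A)^2 + (s^2 * sg)^2)" by (rule cs2)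
  finally have c1: "(norm (g *v (g *v x)))^2 \<le> (\<bar>p\<bar>^2 + q^2) * ((s * A)^2 + (s^2 * sg)^2)" .
  have c2: "\<bar>p\<bar>^2 + q^2 = (norm x)^2" using perp_norm_sq[of x] by (simp add: p_def q_def)
  have c3: "(s * A)^2 + (s^2 * sg)^2 \<le> s^4 * ((v \<bullet> u)^2 + 2 * sg^2)"
  proof -
    have "(s * A)^2 = s^2 * A^2" by (simp add: power_mult_distrib)
    also have "\<dots> \<le> s^2 * (s^2 * ((v \<bullet> u)^2 + sg^2))"
      using gu_sq A_def by (intro mult_left_mono) simp_all
    finally show ?thesis by (simp add: power_mult_distrib algebra_simps power2_eq_square
         power4_eq_xxxx)
  qed
  have "(norm x)^2 * ((s * A)^2 + (s^2 * sg)^2) \<le> (norm x)^2 * (s^4 * ((v \<bullet> u)^2 + 2 * sg^2))"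
    by (rule mult_left_mono[OF c3]) simp
  moreover have "(norm (g *v (g *v x)))^2 \<le> (norm x)^2 * ((s * A)^2 + (s^2 * sg)^2)"
    using c1 unfolding c2 .
  moreover have "(norm x)^2 * (s^4 * ((v \<bullet> u)^2 + 2 * sg^2)) = s^4 * ((v \<bullet> u)^2 + 2 * sg^2) * (norm x)^2"
    by (simp only: mult.commute)
  ultimately show ?thesis by linarith
qed

lemma align:
  assumes "aligned g eps g" "0 \<le> eps"
  shows "eps^2 \<le> (v \<bullet> u)^2 + 2 * sg^2"
proof -
  define K where "K = (v \<bullet> u)^2 + 2 * sg^2"
  have K0: "0 \<le> K" unfolding K_def using sg_nonneg by simp
  have "opnorm (g ** g) \<le> s^2 * sqrt K"
  proof (rule opnorm_le)
    fix x
    have "(norm ((g ** g) *v x))^2 \<le> (s^2 * sqrt K * norm x)^2"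
      using g2_bound[of x] K0 by (simp add: matrix_vector_mul_assoc[symmetric] K_def power_mult_distrib
          power4_eq_xxxx power2_eq_square algebra_simps)
    thus "norm ((g ** g) *v x) \<le> s^2 * sqrt K * norm x"
      by (rule power2_le_imp_le) (simp add: K0)
  qed
  moreover have "eps * s * s \<le> opnorm (g ** g)" using assms(1) by (simp add: aligned_def s_def)
  ultimately have "eps * s^2 \<le> s^2 * sqrt K" by (simp add: power2_eq_square)
  hence "eps \<le> sqrt K" using s_pos by (simp add: mult.commute)
  hence "eps^2 \<le> (sqrt K)^2" using assms(2) by (intro power_mono) simp_all
  hence "eps^2 \<le> K" using K0 by simp
  thus ?thesis unfolding K_def .
qed

end

lemma bessel2:
  fixes a x v :: "real^'n"
  assumes ax: "a \<bullet> x = 0" and v1: "norm v = 1"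
  shows "(v \<bullet> a)^2 * (norm x)^2 + (v \<bullet> x)^2 * (norm a)^2 \<le> (norm a)^2 * (norm x)^2"
proof -
  define A where "A = (norm a)^2"
  define X where "X = (norm x)^2"
  define p where "p = v \<bullet> a"
  define q where "q = v \<bullet> x"
  define w where "w = (A * X) *\<^sub>R v - (p * X) *\<^sub>R a - (q * A) *\<^sub>R x"
  have aa: "a \<bullet> a = A" unfolding A_def by (simp add: power2_norm_eq_inner)
  have xx: "x \<bullet> x = X" unfolding X_def by (simp add: power2_norm_eq_inner)
  have vv: "v \<bullet> v = 1" using v1 by (metis power2_norm_eq_inner one_power2)
  have xa: "x \<bullet> a = 0" using ax by (simp add: inner_commute)
  have "w \<bullet> w = A * X * (A * X - p^2 * X - q^2 * A)"
    unfolding w_def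
    by (simp add: inner_diff_left inner_diff_right aa xx vv ax xa inner_commute[of a v] inner_commute[of x v]
        p_def[symmetric] q_def[symmetric] power2_eq_square algebra_simps)
  hence "0 \<le> A * X * (A * X - p^2 * X - q^2 * A)" by (metis inner_ge_zero)
  moreover have "0 \<le> A" "0 \<le> X" unfolding A_def X_def by simp_all
  ultimately have "A = 0 \<or> X = 0 \<or> 0 \<le> A * X - p^2 * X - q^2 * A"
  proof (cases "A = 0 \<or> X = 0")
    case False
    assume h: "0 \<le> A * X * (A * X - p^2 * X - q^2 * A)" "0 \<le> A" "0 \<le> X"
    hence "0 < A * X" using False by (simp add: order_le_less)
    hence "0 \<le> A * X - p^2 * X - q^2 * A" using h(1) by (simp add: zero_le_mult_iff)
    thus ?thesis by simp
  qed blast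
  moreover have "A = 0 \<Longrightarrow> p = 0" unfolding A_def p_def by simp
  moreover have "X = 0 \<Longrightarrow> q = 0" unfolding X_def q_def by simp
  ultimately have "p^2 * X + q^2 * A \<le> A * X" by auto
  thus ?thesis unfolding A_def X_def p_def q_def .
qed

context topsv
begin

lemma core1:
  assumes gx: "g *v x = lam *\<^sub>R x" and vx: "v \<bullet> x \<noteq> 0" and ax: "a \<bullet> x = 0"
    and ga: "g *v a = w + t *\<^sub>R x" and wx: "w \<bullet> x = 0"
  shows "(norm w)^2 * (v \<bullet> x)^2 \<le> (sg * s)^2 * ((norm a)^2 * (norm x)^2)"
proof -
  define k where "k = (v \<bullet> a) / (v \<bullet> x)"
  define a' where "a' = a - k *\<^sub>R x"
  have "a' \<bullet> v = a \<bullet> v - k * (x \<bullet> v)" by (simp add: a'_def inner_diff_left)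
  also have "\<dots> = v \<bullet> a - k * (v \<bullet> x)" by (simp only: inner_commute)
  finally have "a' \<bullet> v = v \<bullet> a - k * (v \<bullet> x)" .
  hence a'v: "a' \<bullet> v = 0" using vx by (simp add: k_def)
  have ga': "g *v a' = w + (t - k * lam) *\<^sub>R x"
    by (simp add: a'_def matrix_vector_mult_diff_distrib matrix_vector_mult_scaleR ga gx algebra_simps)
  have "(norm (g *v a'))^2 = (norm w)^2 + (t - k * lam)^2 * (norm x)^2"
    unfolding ga' using wx by (simp add: norm_add_sq power_mult_distrib)
  hence "(norm w)^2 \<le> (norm (g *v a'))^2" by simp
  also have "\<dots> \<le> (sg * s * norm a')^2"
    using small[OF a'v] by (intro power_mono) simp_all
  finally have w1: "(norm w)^2 \<le> (sg * s)^2 * (norm a')^2" by (simp add: power_mult_distrib)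
  have a'sq: "(norm a')^2 = (norm a)^2 + k^2 * (norm x)^2"
    unfolding a'_def using ax by (simp add: norm_add_sq[of a "- (k *\<^sub>R x)", simplified] power_mult_distrib
        inner_commute)
  have "(norm a')^2 * (v \<bullet> x)^2 = (norm a)^2 * (v \<bullet> x)^2 + (v \<bullet> a)^2 * (norm x)^2"
    unfolding a'sq k_def using vx by (simp add: field_simps power2_eq_square)
  also have "\<dots> \<le> (norm a)^2 * (norm x)^2" using bessel2[OF ax v1] by (simp add: algebra_simps)
  finally have a2: "(norm a')^2 * (v \<bullet> x)^2 \<le> (norm a)^2 * (norm x)^2" .
  have "(norm w)^2 * (v \<bullet> x)^2 \<le> (sg * s)^2 * (norm a')^2 * (v \<bullet> x)^2"
    using w1 by (intro mult_right_mono) simp_all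
  also have "\<dots> \<le> (sg * s)^2 * ((norm a)^2 * (norm x)^2)"
    using a2 by (simp add: mult.assoc mult_left_mono)
  finally show ?thesis .
qed

lemma core:
  assumes gx: "g *v x = lam *\<^sub>R x" and vx: "v \<bullet> x \<noteq> 0"
    and ax: "a \<bullet> x = 0" and bx: "b \<bullet> x = 0" and ab: "a \<noteq> 0 \<or> b \<noteq> 0"
    and ga: "g *v a = al *\<^sub>R a - be *\<^sub>R b + t1 *\<^sub>R x"
    and gb: "g *v b = be *\<^sub>R a + al *\<^sub>R b + t2 *\<^sub>R x"
  shows "(al^2 + be^2) * (v \<bullet> x)^2 \<le> (sg * s)^2 * (norm x)^2"
proof -
  have ia: "(norm (al *\<^sub>R a - be *\<^sub>R b))^2 * (v \<bullet> x)^2 \<le> (sg * s)^2 * ((norm a)^2 * (norm x)^2)"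
    by (rule core1[OF gx vx ax ga]) (simp add: inner_diff_left ax bx)
  have ib: "(norm (be *\<^sub>R a + al *\<^sub>R b))^2 * (v \<bullet> x)^2 \<le> (sg * s)^2 * ((norm b)^2 * (norm x)^2)"
    by (rule core1[OF gx vx bx gb]) (simp add: inner_add_left ax bx)
  have id: "(norm (al *\<^sub>R a - be *\<^sub>R b))^2 + (norm (be *\<^sub>R a + al *\<^sub>R b))^2
      = (al^2 + be^2) * ((norm a)^2 + (norm b)^2)"
    unfolding power2_norm_eq_inner by (simp add: inner_diff_left inner_diff_right inner_add_left inner_add_right
        inner_commute power2_eq_square algebra_simps)
  have pos: "0 < (norm a)^2 + (norm b)^2" using ab by (auto simp: add_pos_nonneg add_nonneg_pos)
  have "((al^2 + be^2) * (v \<bullet> x)^2) * ((norm a)^2 + (norm b)^2)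
      = ((norm (al *\<^sub>R a - be *\<^sub>R b))^2 + (norm (be *\<^sub>R a + al *\<^sub>R b))^2) * (v \<bullet> x)^2"
    unfolding id by (simp add: algebra_simps)
  also have "\<dots> \<le> ((sg * s)^2 * (norm x)^2) * ((norm a)^2 + (norm b)^2)"
    using ia ib by (simp add: algebra_simps)
  finally show ?thesis using pos by (simp add: mult_le_cancel_right)
qed

end

locale mainctx = topsv g v for g :: "real^'n^'n" and v +
  fixes eps :: real
  assumes eps0: "0 < eps" and eps1: "eps \<le> 1" and sgb: "sg \<le> eps^2 / 8"
    and al: "aligned g eps g"
begin

definition "c = \<bar>v \<bullet> u\<bar>"
definition "r = 2 * sg / eps"

lemma c_bound: "eps - sg \<le> c"
proof -
  have h: "eps^2 \<le> c^2 + 2 * sg^2" using align[OF al] eps0 by (simp add: c_def)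
  have s8: "sg \<le> eps / 8"
  proof -
    have "eps^2 / 8 \<le> eps / 8" using eps0 eps1 by (simp add: power2_eq_square mult_left_le)
    thus ?thesis using sgb by linarith
  qed
  have c0: "0 \<le> c" by (simp add: c_def)
  show ?thesis
  proof (rule ccontr)
    assume "\<not> eps - sg \<le> c"
    hence lt: "c < eps - sg" by simp
    hence "c^2 < (eps - sg)^2" using c0 by (intro power_strict_mono) simp_all
    moreover have "(eps - sg)^2 \<le> eps^2 - 2 * sg^2"
    proof -
      have "sg * sg \<le> (eps/8) * sg" by (rule mult_right_mono[OF s8 sg_nonneg])
      moreover have "0 \<le> eps * sg" using eps0 sg_nonneg by simp
      ultimately have "3 * sg^2 \<le> 2 * eps * sg" unfolding power2_eq_square by linarith
      thus ?thesis by (simp add: power2_eq_square algebra_simps)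
    qed
    ultimately show False using h by linarith
  qed
qed


lemma a_facts: "sg / eps \<le> eps / 8" "0 \<le> sg / eps" "sg = (sg / eps) * eps"
  using sgb eps0 sg_nonneg by (simp_all add: divide_le_eq power2_eq_square mult.commute)

lemma r_nonneg: "0 \<le> r" unfolding r_def using sg_nonneg eps0 by simp

lemma r_small: "r \<le> eps / 4"
proof -
  have "r = 2 * (sg / eps)" unfolding r_def by simp
  thus ?thesis using a_facts(1) by linarith
qed

lemma cr: "5 * eps / 8 \<le> c - r"
proof -
  have "sg \<le> eps / 8"
  proof -
    have "eps^2 / 8 \<le> eps / 8" using eps0 eps1 by (simp add: power2_eq_square mult_left_le)
    thus ?thesis using sgb by linarith
  qed
  thus ?thesis using c_bound r_small by linarith
qed

lemma r_arith: "sg * (1 + r) \<le> r * (c - r)"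
proof -
  define a where "a = sg / eps"
  have sga: "sg = a * eps" and a0: "0 \<le> a" and a8: "a \<le> eps / 8"
    using a_facts unfolding a_def by simp_all
  have r2: "r = 2 * a" unfolding r_def a_def by simp
  have h1: "4 * a \<le> eps / 2" using a8 by simp
  have "4 * a * eps \<le> (1/2) * eps"
    using a8 eps1 eps0 by (intro mult_right_mono) simp_all
  hence t0: "0 \<le> eps - 4 * a * eps - 4 * a" using h1 by simp
  hence at: "0 \<le> a * (eps - 4 * a * eps - 4 * a)" using a0 by simp
  have "eps - a * eps - 2 * a \<le> c - 2 * a" using c_bound sga by simp
  hence m: "2 * a * (eps - a * eps - 2 * a) \<le> 2 * a * (c - 2 * a)" using a0 by (intro mult_left_mono) simp_all
  have e1: "sg * (1 + 2 * a) = a * eps + 2 * (a * a * eps)" unfolding sga by (simp add: algebra_simps)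
  have e2: "2 * a * (eps - a * eps - 2 * a) = 2 * (a * eps) - 2 * (a * a * eps) - 4 * (a * a)"
    by (simp add: algebra_simps)
  have e3: "a * (eps - 4 * a * eps - 4 * a) = a * eps - 4 * (a * a * eps) - 4 * (a * a)"
    by (simp add: algebra_simps)
  have "a * eps + 2 * (a * a * eps) \<le> 2 * (a * eps) - 2 * (a * a * eps) - 4 * (a * a)"
    using at unfolding e3 by linarith
  hence "sg * (1 + 2 * a) \<le> 2 * a * (eps - a * eps - 2 * a)" unfolding e1 e2 .
  hence "sg * (1 + 2 * a) \<le> 2 * a * (c - 2 * a)" using m by (rule order_trans)
  thus ?thesis unfolding r2 .
qed

lemma fixpoint:
  obtains y where "norm y \<le> r" "u \<bullet> y = 0"
    "g *v (u + y) = (s * (v \<bullet> (u + y))) *\<^sub>R (u + y)"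
    "5 * eps / 8 \<le> \<bar>v \<bullet> (u + y)\<bar>"
proof -
  define S where "S = cball (0::real^'n) r"
  define F where "F y = (1 / (s * (v \<bullet> (u + y)))) *\<^sub>R (g *v perp (u + y))" for y
  have den: "5 * eps / 8 \<le> \<bar>v \<bullet> (u + y)\<bar>" if "y \<in> S" for y
  proof -
    have "\<bar>v \<bullet> y\<bar> \<le> norm y" using Cauchy_Schwarz_ineq2[of v y] v1 by simp
    moreover have "norm y \<le> r" using that by (simp add: S_def)
    moreover have "v \<bullet> (u + y) = v \<bullet> u + v \<bullet> y" by (simp add: inner_add_right)
    ultimately have "c - r \<le> \<bar>v \<bullet> (u + y)\<bar>" unfolding c_def by linarith
    thus ?thesis using cr by linarith
  qed
  have den0: "s * (v \<bullet> (u + y)) \<noteq> 0" if "y \<in> S" for y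
    using den[OF that] eps0 s_pos by auto
  have contG: "continuous_on S (\<lambda>y. g *v perp (u + y))"
    by (rule bounded_linear.continuous_on[OF matrix_vector_mul_bounded_linear])
      (simp add: perp_def continuous_intros)
  have contF: "continuous_on S F"
    unfolding F_def using den0 by (intro continuous_intros contG) auto
  have FS: "F y \<in> S" if "y \<in> S" for y
  proof -
    have ny: "norm y \<le> r" using that by (simp add: S_def)
    have "norm (g *v perp (u + y)) \<le> sg * s * norm (perp (u + y))" by (rule decomp_small)
    also have "\<dots> \<le> sg * s * (1 + r)"
    proof -
      have "norm (perp (u + y)) \<le> norm (u + y)" by (rule perp_norm)
      also have "\<dots> \<le> norm u + norm y" by (rule norm_triangle_ineq)
      finally have "norm (perp (u + y)) \<le> 1 + r" using ny u1 by simp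
      thus ?thesis using sg_nonneg s_pos by (intro mult_left_mono) simp_all
    qed
    finally have num: "norm (g *v perp (u + y)) \<le> sg * s * (1 + r)" .
    have d: "s * (c - r) \<le> \<bar>s * (v \<bullet> (u + y))\<bar>"
    proof -
      have "\<bar>v \<bullet> y\<bar> \<le> norm y" using Cauchy_Schwarz_ineq2[of v y] v1 by simp
      moreover have "v \<bullet> (u + y) = v \<bullet> u + v \<bullet> y" by (simp add: inner_add_right)
      ultimately have "c - r \<le> \<bar>v \<bullet> (u + y)\<bar>" unfolding c_def using ny by linarith
      thus ?thesis using s_pos by (simp add: abs_mult)
    qed
    have crp: "0 < c - r" using cr eps0 by linarith
    have "norm (F y) = norm (g *v perp (u + y)) / \<bar>s * (v \<bullet> (u + y))\<bar>"
      unfolding F_def norm_scaleR abs_divide abs_one by simp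
    also have "\<dots> \<le> sg * s * (1 + r) / (s * (c - r))"
      using num d crp s_pos sg_nonneg r_nonneg by (intro frac_le) simp_all
    also have "\<dots> = sg * (1 + r) / (c - r)" using s_pos by simp
    also have "\<dots> \<le> r" using r_arith crp by (simp add: divide_le_eq)
    finally show ?thesis by (simp add: S_def)
  qed
  obtain y where yS: "y \<in> S" and Fy: "F y = y"
    by (rule brouwer[of S F]) (use contF FS r_nonneg in \<open>auto simp: S_def\<close>)
  have d0: "s * (v \<bullet> (u + y)) \<noteq> 0" by (rule den0[OF yS])
  have gp: "g *v perp (u + y) = (s * (v \<bullet> (u + y))) *\<^sub>R y"
  proof -
    have "g *v perp (u + y) = (s * (v \<bullet> (u + y))) *\<^sub>R F y" using d0 by (simp add: F_def)
    thus ?thesis using Fy by simp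
  qed
  have uy: "u \<bullet> y = 0"
  proof -
    have "u \<bullet> F y = 0" unfolding F_def by (simp add: decomp_orth)
    thus ?thesis using Fy by simp
  qed
  show ?thesis
  proof
    show "norm y \<le> r" using yS by (simp add: S_def)
    show "u \<bullet> y = 0" by (rule uy)
    show "g *v (u + y) = (s * (v \<bullet> (u + y))) *\<^sub>R (u + y)"
      by (subst decomp) (simp add: gp scaleR_add_right)
    show "5 * eps / 8 \<le> \<bar>v \<bullet> (u + y)\<bar>" by (rule den[OF yS])
  qed
qed

end

definition outer :: "real^'n \<Rightarrow> real^'n \<Rightarrow> real^'n^'n" where
  "outer a b = (\<chi> i j. a$i * b$j)"

lemma outer_mv: "outer a b *v w = (b \<bullet> w) *\<^sub>R a"
  by (simp add: outer_def vec_eq_iff matrix_vector_mult_def inner_vec_def sum_distrib_left mult_ac)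

lemma mat_mv: "(mat z :: real^'n^'n) *v w = z *\<^sub>R w"
  by (simp add: vec_eq_iff matrix_vector_mult_def mat_def if_distrib if_distribR sum.delta cong: if_cong)

lemma smat_mv: "(c *\<^sub>R (M::real^'n^'n)) *v w = c *\<^sub>R (M *v w)"
  by (simp add: scaleR_matrix_vector_assoc)

lemma det_rank1:
  fixes x :: "real^'n"
  assumes x1: "norm x = 1"
  shows "det (mat 1 + c *\<^sub>R outer x x) = 1 + c"
proof -
  obtain k :: 'n where True by simp
  obtain A where A: "orthogonal_matrix A" "A *v (axis k 1) = x"
    using orthogonal_matrix_exists_basis[OF x1] by metis
  have AtA: "transpose A ** A = mat 1" using A(1) by (simp add: orthogonal_matrix_def)
  have Atx: "transpose A *v x = axis k 1"
  proof -
    have "transpose A *v x = (transpose A ** A) *v axis k 1" using A(2) by (simp add: matrix_vector_mul_assoc[symmetric])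
    thus ?thesis using AtA by simp
  qed
  have Atx2: "x v* A = axis k 1" using Atx by simp
  define D where "D = mat 1 + c *\<^sub>R outer x x"
  define E :: "real^'n^'n" where "E = (\<chi> i j. if i = j then (if i = k then 1 + c else 1) else 0)"
  have "transpose A ** D ** A = E"
  proof (subst matrix_eq, intro allI)
    fix w :: "real^'n"
    have xA: "x \<bullet> (A *v w) = w $ k"
    proof -
      have "x \<bullet> (A *v w) = (x v* A) \<bullet> w" by (simp add: dot_lmul_matrix)
      also have "x v* A = axis k 1" using Atx by simp
      finally show ?thesis by (simp add: inner_axis inner_commute)
    qed
    have "(transpose A ** D ** A) *v w = transpose A *v (D *v (A *v w))"
      by (simp add: matrix_vector_mul_assoc matrix_mul_assoc)
    also have "\<dots> = transpose A *v (A *v w + (c * w $ k) *\<^sub>R x)"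
      by (simp add: D_def matrix_vector_mult_add_rdistrib smat_mv outer_mv xA)
    also have "\<dots> = w + (c * w $ k) *\<^sub>R axis k 1"
      by (simp add: matrix_vector_right_distrib matrix_vector_mult_scaleR matrix_vector_mul_assoc AtA Atx Atx2)
    also have "\<dots> = E *v w"
    proof -
      have "(E *v w)$i = (w + (c * w $ k) *\<^sub>R axis k 1)$i" for i
      proof -
        have "(E *v w)$i = (\<Sum>j\<in>UNIV. (if i = j then (if i = k then 1 + c else 1) else 0) * w$j)"
          by (simp add: E_def matrix_vector_mult_def)
        also have "\<dots> = (\<Sum>j\<in>UNIV. if i = j then (if i = k then 1 + c else 1) * w$j else 0)"
          by (intro sum.cong) auto
        also have "\<dots> = (if i = k then 1 + c else 1) * w$i" by (simp add: sum.delta)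
        also have "\<dots> = (w + (c * w $ k) *\<^sub>R axis k 1)$i" by (simp add: axis_def algebra_simps)
        finally show ?thesis .
      qed
      thus ?thesis by (simp add: vec_eq_iff)
    qed
    finally show "(transpose A ** D ** A) *v w = E *v w" .
  qed
  hence "det (transpose A ** D ** A) = det E" by simp
  hence "det (transpose A) * det D * det A = det E" by (simp add: det_mul)
  moreover have "det (transpose A) * det A = 1"
    using det_mul[of "transpose A" A] AtA by simp
  moreover have "det E = 1 + c"
  proof -
    have "det E = (\<Prod>i\<in>UNIV. E$i$i)" by (rule det_diagonal) (simp add: E_def)
    also have "\<dots> = (\<Prod>i\<in>UNIV. if i = k then 1 + c else 1)" by (simp add: E_def)
    also have "\<dots> = 1 + c" by (simp add: prod.delta)
    finally show ?thesis .
  qed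
  moreover have "det (transpose A) * det D * det A = det D * (det (transpose A) * det A)"
    by (simp only: mult_ac)
  ultimately show ?thesis unfolding D_def by simp
qed



lemma poly_det: "poly (det (A :: 'a::comm_ring_1 poly^'n^'n)) z = det (\<chi> i j. poly (A$i$j) z)"
  by (simp add: det_def poly_sum poly_prod)

lemma mpc_add: "map_poly complex_of_real (p + q) = map_poly complex_of_real p + map_poly complex_of_real q"
  by (intro poly_eqI) (simp add: coeff_map_poly)

lemma mpc_mult: "map_poly complex_of_real (p * q) = map_poly complex_of_real p * map_poly complex_of_real q"
  by (intro poly_eqI) (simp add: coeff_map_poly coeff_mult)

lemma mpc_sum: "map_poly complex_of_real (sum f S) = (\<Sum>i\<in>S. map_poly complex_of_real (f i))"
  by (induction S rule: infinite_finite_induct) (simp_all add: mpc_add)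

lemma mpc_prod: "map_poly complex_of_real (prod f S) = (\<Prod>i\<in>S. map_poly complex_of_real (f i))"
  by (induction S rule: infinite_finite_induct) (simp_all add: mpc_mult)

lemma mpc_of_int: "map_poly complex_of_real (of_int k) = of_int k"
  by (simp add: of_int_poly map_poly_pCons)

lemma mpc_det: "map_poly complex_of_real (det A) = det (\<chi> i j. map_poly complex_of_real (A$i$j))"
  by (simp add: det_def mpc_sum mpc_prod mpc_mult mpc_of_int)

lemma det0_kernel:
  fixes A :: "'a::field^'n^'n"
  assumes "det A = 0"
  shows "\<exists>y. y \<noteq> 0 \<and> A *v y = 0"
proof -
  have "\<not> invertible A" using assms invertible_det_nz by blast
  hence "\<not> (\<exists>B. B ** A = mat 1)" using invertible_left_inverse by blast
  thus ?thesis using matrix_left_invertible_ker by blast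
qed

lemma insort_max: "sorted xs \<Longrightarrow> (\<forall>y\<in>set xs. y < m) \<Longrightarrow> insort m xs = xs @ [m]"
  by (induction xs) auto

definition Pm :: "real^'n \<Rightarrow> real^'n^'n" where "Pm x = mat 1 - outer x x"
definition Cm :: "real^'n^'n \<Rightarrow> real^'n \<Rightarrow> real^'n^'n" where "Cm g x = outer x x - g ** Pm x"
definition Mp :: "real^'n^'n \<Rightarrow> real^'n \<Rightarrow> real poly^'n^'n" where
  "Mp g x = (\<chi> i j. [: Cm g x $i$j, Pm x $i$j :])"

lemma Pm_mv: "Pm x *v w = w - (x \<bullet> w) *\<^sub>R x"
  by (simp add: Pm_def matrix_vector_mult_diff_rdistrib outer_mv)

lemma Cm_mv: "Cm g x *v w = (x \<bullet> w) *\<^sub>R x - g *v (Pm x *v w)"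
  by (simp add: Cm_def matrix_vector_mult_diff_rdistrib outer_mv matrix_vector_mul_assoc)

lemma charpoly_eval: "poly (charpoly g) z = det (mat z - g)"
  unfolding charpoly_def poly_det
  by (rule arg_cong[where f=det]) (simp add: vec_eq_iff mat_def)

lemma Mp_eval: "poly (det (Mp g x)) z = det (Cm g x + z *\<^sub>R Pm x)"
  unfolding poly_det
  by (rule arg_cong[where f=det]) (simp add: vec_eq_iff Mp_def)

lemma charpoly_factor:
  fixes g :: "real^'n^'n" and x :: "real^'n"
  assumes x1: "norm x = 1" and gx: "g *v x = lam *\<^sub>R x"
  shows "charpoly g = [:-lam, 1:] * det (Mp g x)"
proof -
  have xx: "x \<bullet> x = 1" using x1 by (metis power2_norm_eq_inner one_power2)
  have "poly (charpoly g) z = poly ([:-lam, 1:] * det (Mp g x)) z" for z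
  proof -
    define D where "D = mat 1 + (z - lam - 1) *\<^sub>R outer x x"
    have fac: "mat z - g = (Cm g x + z *\<^sub>R Pm x) ** D"
    proof (subst matrix_eq, intro allI)
      fix w :: "real^'n"
      define y where "y = w + ((z - lam - 1) * (x \<bullet> w)) *\<^sub>R x"
      have Dw: "D *v w = y" by (simp add: D_def y_def matrix_vector_mult_add_rdistrib smat_mv outer_mv)
      have xy: "x \<bullet> y = (z - lam) * (x \<bullet> w)" by (simp add: y_def inner_add_right xx algebra_simps)
      have Py: "Pm x *v y = w - (x \<bullet> w) *\<^sub>R x"
        by (simp add: Pm_mv xy) (simp add: y_def algebra_simps)
      have "((Cm g x + z *\<^sub>R Pm x) ** D) *v w = (Cm g x + z *\<^sub>R Pm x) *v y"
        by (simp add: matrix_vector_mul_assoc[symmetric] Dw)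
      also have "\<dots> = (x \<bullet> y) *\<^sub>R x - g *v (Pm x *v y) + z *\<^sub>R (Pm x *v y)"
        by (simp add: matrix_vector_mult_add_rdistrib smat_mv Cm_mv)
      also have "\<dots> = z *\<^sub>R w - g *v w"
        unfolding Py xy by (simp add: matrix_vector_mult_diff_distrib matrix_vector_mult_scaleR gx algebra_simps)
      also have "\<dots> = (mat z - g) *v w" by (simp add: matrix_vector_mult_diff_rdistrib mat_mv)
      finally show "(mat z - g) *v w = ((Cm g x + z *\<^sub>R Pm x) ** D) *v w" by simp
    qed
    have "det D = z - lam" unfolding D_def by (simp add: det_rank1[OF x1])
    hence "det (mat z - g) = det (Cm g x + z *\<^sub>R Pm x) * (z - lam)" by (simp add: fac det_mul)
    thus ?thesis by (simp add: charpoly_eval Mp_eval algebra_simps)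
  qed
  thus ?thesis by (intro poly_eq_poly_eq_iff[THEN iffD1] ext)
qed

lemma mpc_pCons2: "map_poly complex_of_real [:a, b:] = [:complex_of_real a, complex_of_real b:]"
  by (intro poly_eqI) (simp add: coeff_map_poly coeff_pCons split: nat.splits)

lemma root_vectors:
  fixes g :: "real^'n^'n" and x :: "real^'n"
  assumes x1: "norm x = 1"
    and root: "poly (map_poly complex_of_real (det (Mp g x))) mu = 0"
  obtains A B t1 t2 where "A \<bullet> x = 0" "B \<bullet> x = 0" "A \<noteq> 0 \<or> B \<noteq> 0"
    "g *v A = Re mu *\<^sub>R A - Im mu *\<^sub>R B + t1 *\<^sub>R x"
    "g *v B = Im mu *\<^sub>R A + Re mu *\<^sub>R B + t2 *\<^sub>R x"
proof -
  have xx: "x \<bullet> x = 1" using x1 by (metis power2_norm_eq_inner one_power2)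
  define MC :: "complex^'n^'n" where
    "MC = (\<chi> i j. complex_of_real (Cm g x $i$j) + mu * complex_of_real (Pm x $i$j))"
  have "det MC = 0"
    using root unfolding mpc_det poly_det by (simp add: MC_def Mp_def mpc_pCons2)
  then obtain y where y0: "y \<noteq> 0" and My: "MC *v y = 0" using det0_kernel by blast
  define a0 where "a0 = (\<chi> i. Re (y$i))"
  define b0 where "b0 = (\<chi> i. Im (y$i))"
  define al where "al = Re mu"
  define be where "be = Im mu"
  have comp: "(\<Sum>j\<in>UNIV. (complex_of_real (Cm g x $i$j) + mu * complex_of_real (Pm x $i$j)) * y$j) = 0" for i
    using My by (simp add: vec_eq_iff MC_def matrix_vector_mult_def)
  have re: "Cm g x *v a0 + al *\<^sub>R (Pm x *v a0) - be *\<^sub>R (Pm x *v b0) = 0"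
  proof -
    have "(Cm g x *v a0 + al *\<^sub>R (Pm x *v a0) - be *\<^sub>R (Pm x *v b0))$i
        = Re (\<Sum>j\<in>UNIV. (complex_of_real (Cm g x $i$j) + mu * complex_of_real (Pm x $i$j)) * y$j)" for i
      by (simp add: Re_sum matrix_vector_mult_def a0_def b0_def al_def be_def sum_distrib_left
          sum.distrib sum_subtractf algebra_simps)
    thus ?thesis using comp by (simp add: vec_eq_iff)
  qed
  have im: "Cm g x *v b0 + be *\<^sub>R (Pm x *v a0) + al *\<^sub>R (Pm x *v b0) = 0"
  proof -
    have "(Cm g x *v b0 + be *\<^sub>R (Pm x *v a0) + al *\<^sub>R (Pm x *v b0))$i
        = Im (\<Sum>j\<in>UNIV. (complex_of_real (Cm g x $i$j) + mu * complex_of_real (Pm x $i$j)) * y$j)" for i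
      by (simp add: Im_sum matrix_vector_mult_def a0_def b0_def al_def be_def sum_distrib_left
          sum.distrib algebra_simps)
    thus ?thesis using comp by (simp add: vec_eq_iff)
  qed
  define A where "A = Pm x *v a0"
  define B where "B = Pm x *v b0"
  have Ax: "A \<bullet> x = 0" unfolding A_def Pm_mv by (simp add: inner_diff_left inner_diff_right xx inner_commute)
  have Bx: "B \<bullet> x = 0" unfolding B_def Pm_mv by (simp add: inner_diff_left inner_diff_right xx inner_commute)
  have gA: "g *v A = al *\<^sub>R A - be *\<^sub>R B + (x \<bullet> a0) *\<^sub>R x"
    using re unfolding Cm_mv A_def[symmetric] B_def[symmetric] by (simp add: algebra_simps eq_diff_eq)
  have gB: "g *v B = be *\<^sub>R A + al *\<^sub>R B + (x \<bullet> b0) *\<^sub>R x"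
    using im unfolding Cm_mv A_def[symmetric] B_def[symmetric] by (simp add: algebra_simps eq_diff_eq)
  have AB: "A \<noteq> 0 \<or> B \<noteq> 0"
  proof (rule ccontr)
    assume "\<not> (A \<noteq> 0 \<or> B \<noteq> 0)"
    hence A0: "A = 0" and B0: "B = 0" by auto
    have ga: "x \<bullet> a0 = 0"
    proof -
      have "(x \<bullet> a0) *\<^sub>R x = 0" using gA A0 B0 by simp
      thus ?thesis using x1 by auto
    qed
    have gb: "x \<bullet> b0 = 0"
    proof -
      have "(x \<bullet> b0) *\<^sub>R x = 0" using gB A0 B0 by simp
      thus ?thesis using x1 by auto
    qed
    have "a0 = 0" using A0 ga unfolding A_def Pm_mv by simp
    moreover have "b0 = 0" using B0 gb unfolding B_def Pm_mv by simp
    ultimately have "y = 0"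
      by (simp add: a0_def b0_def vec_eq_iff complex_eq_iff)
    thus False using y0 by simp
  qed
  show ?thesis by (rule that[OF Ax Bx AB gA[unfolded al_def be_def] gB[unfolded al_def be_def]])
qed

lemma charpoly_nz: "charpoly (g::real^'n^'n) \<noteq> 0"
proof
  assume h: "charpoly g = 0"
  define z where "z = opnorm g + 1"
  have ker: "(mat z - g) *v w = 0 \<Longrightarrow> w = 0" for w
  proof -
    assume "(mat z - g) *v w = 0"
    hence "z *\<^sub>R w = g *v w" by (simp add: matrix_vector_mult_diff_rdistrib mat_mv)
    hence "z * norm w = norm (g *v w)" using opnorm_nonneg[of g] by (metis norm_scaleR abs_of_nonneg z_def
          add_nonneg_pos zero_less_one less_imp_le)
    hence "z * norm w \<le> opnorm g * norm w" using opnorm_bound[of g w] by simp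
    hence "norm w \<le> 0" unfolding z_def by (simp add: algebra_simps)
    thus "w = 0" by simp
  qed
  have "invertible (mat z - g)"
    using ker matrix_left_invertible_ker invertible_left_inverse by blast
  hence "det (mat z - g) \<noteq> 0" by (simp add: invertible_det_nz)
  moreover have "det (mat z - g) = 0" using charpoly_eval[of g z] h by simp
  ultimately show False by simp
qed

lemma pdist_scale:
  assumes "a \<noteq> 0" "b \<noteq> 0"
  shows "pdist (a *\<^sub>R p) (b *\<^sub>R q) = pdist p q"
proof -
  have e: "(norm (a *\<^sub>R p))^2 * (norm (b *\<^sub>R q))^2 - ((a *\<^sub>R p) \<bullet> (b *\<^sub>R q))^2
      = (a * b)^2 * ((norm p)^2 * (norm q)^2 - (p \<bullet> q)^2)"
    by (simp add: power_mult_distrib algebra_simps)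
  have "wnorm (vwedge (a *\<^sub>R p) (b *\<^sub>R q)) = \<bar>a * b\<bar> * wnorm (vwedge p q)"
    unfolding wnorm_vwedge e by (simp add: real_sqrt_mult)
  thus ?thesis unfolding pdist_def using assms by (simp add: abs_mult)
qed

lemma insort_max': "sorted xs \<Longrightarrow> (\<forall>y\<in>set xs. y < m) \<Longrightarrow> insort m xs = xs @ [m]"
  by (rule insort_max)

context mainctx
begin

definition "yv = (SOME y. norm y \<le> r \<and> u \<bullet> y = 0 \<and> g *v (u + y) = (s * (v \<bullet> (u + y))) *\<^sub>R (u + y)
   \<and> 5 * eps / 8 \<le> \<bar>v \<bullet> (u + y)\<bar>)"

lemma yv: "norm yv \<le> r" "u \<bullet> yv = 0" "g *v (u + yv) = (s * (v \<bullet> (u + yv))) *\<^sub>R (u + yv)"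
   "5 * eps / 8 \<le> \<bar>v \<bullet> (u + yv)\<bar>"
proof -
  have "\<exists>y. norm y \<le> r \<and> u \<bullet> y = 0 \<and> g *v (u + y) = (s * (v \<bullet> (u + y))) *\<^sub>R (u + y)
   \<and> 5 * eps / 8 \<le> \<bar>v \<bullet> (u + y)\<bar>"
    by (rule fixpoint) blast
  from someI_ex[OF this] show "norm yv \<le> r" "u \<bullet> yv = 0" "g *v (u + yv) = (s * (v \<bullet> (u + yv))) *\<^sub>R (u + yv)"
   "5 * eps / 8 \<le> \<bar>v \<bullet> (u + yv)\<bar>" unfolding yv_def by blast+
qed

definition "x0 = u + yv"
definition "lam = s * (v \<bullet> x0)"
definition "nx = norm x0"
definition "xx = (1 / nx) *\<^sub>R x0"
definition "Bd = sg * s * nx / \<bar>v \<bullet> x0\<bar>"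

lemma uu: "u \<bullet> u = 1" using u1 by (metis power2_norm_eq_inner one_power2)

lemma nx2: "nx^2 = 1 + (norm yv)^2"
  unfolding nx_def x0_def by (simp add: norm_add_sq yv(2) u1)

lemma nx1: "1 \<le> nx"
proof (rule power2_le_imp_le)
  show "1^2 \<le> nx^2" using nx2 by simp
qed (simp add: nx_def)

lemma nxr: "nx \<le> 1 + r"
  unfolding nx_def x0_def using norm_triangle_ineq[of u yv] u1 yv(1) by simp

lemma vx0: "5 * eps / 8 \<le> \<bar>v \<bullet> x0\<bar>" using yv(4) by (simp add: x0_def)

lemma vx0nz: "v \<bullet> x0 \<noteq> 0" using vx0 eps0 by auto

lemma lam_abs: "\<bar>lam\<bar> = s * \<bar>v \<bullet> x0\<bar>" using s_pos by (simp add: lam_def abs_mult)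

lemma lam_pos: "0 < \<bar>lam\<bar>" using lam_abs s_pos vx0nz by simp

lemma gx0: "g *v x0 = lam *\<^sub>R x0" using yv(3) by (simp add: x0_def lam_def)

lemma x0nz: "x0 \<noteq> 0" using nx1 unfolding nx_def by auto

lemma x1: "norm xx = 1" using x0nz by (simp add: xx_def nx_def)

lemma gx: "g *v xx = lam *\<^sub>R xx" by (simp add: xx_def matrix_vector_mult_scaleR gx0)

lemma vx: "v \<bullet> xx = (v \<bullet> x0) / nx" by (simp add: xx_def)

lemma vxnz: "v \<bullet> xx \<noteq> 0" using vx vx0nz nx1 by simp

lemma Bd0: "0 \<le> Bd" unfolding Bd_def using sg_nonneg s_pos nx1 by simp

end

context mainctx
begin

lemma gen_bound: assumes "m^2 * (v \<bullet> xx)^2 \<le> (sg * s)^2 * (norm xx)^2" shows "\<bar>m\<bar> \<le> Bd"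
proof -
  have h0: "m^2 * (v \<bullet> xx)^2 \<le> (sg * s)^2" using assms unfolding x1 by simp
  have h1: "(\<bar>m\<bar> * \<bar>v \<bullet> xx\<bar>)^2 = m^2 * (v \<bullet> xx)^2" by (simp only: power_mult_distrib power2_abs)
  have p: "0 < \<bar>v \<bullet> xx\<bar>" using vxnz by simp
  have h2: "\<bar>m\<bar> * \<bar>v \<bullet> xx\<bar> \<le> sg * s"
  proof (rule power2_le_imp_le)
    show "(\<bar>m\<bar> * \<bar>v \<bullet> xx\<bar>)^2 \<le> (sg * s)^2" unfolding h1 by (rule h0)
    show "0 \<le> sg * s" using sg_nonneg s_pos by simp
  qed
  have h3: "\<bar>m\<bar> \<le> sg * s / \<bar>v \<bullet> xx\<bar>" by (rule mult_imp_le_div_pos[OF p h2])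
  have "\<bar>v \<bullet> xx\<bar> = \<bar>(v \<bullet> x0) / nx\<bar>" by (simp only: vx)
  also have "\<dots> = \<bar>v \<bullet> x0\<bar> / \<bar>nx\<bar>" by (rule abs_divide)
  also have "\<bar>nx\<bar> = nx" using nx1 by simp
  finally have e: "\<bar>v \<bullet> xx\<bar> = \<bar>v \<bullet> x0\<bar> / nx" .
  have "sg * s / \<bar>v \<bullet> xx\<bar> = Bd" unfolding e Bd_def by (rule divide_divide_eq_right)
  thus ?thesis using h3 by simp
qed

lemma Bd_rel: "Bd \<le> 4 * sg * \<bar>lam\<bar> / eps^2"
proof -
  have "nx * eps^2 \<le> (5/4) * eps^2" using nxr r_small eps1 by (intro mult_right_mono) simp_all
  also have "\<dots> \<le> 4 * (5 * eps / 8)^2" by (simp add: power2_eq_square)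
  also have "\<dots> \<le> 4 * (v \<bullet> x0)^2"
  proof -
    have "(5 * eps / 8)^2 \<le> \<bar>v \<bullet> x0\<bar>^2" by (rule power_mono[OF vx0]) (use eps0 in simp)
    thus ?thesis by simp
  qed
  finally have k: "nx * eps^2 \<le> 4 * (v \<bullet> x0)^2" .
  have sq: "(v \<bullet> x0)^2 = \<bar>v \<bullet> x0\<bar> * \<bar>v \<bullet> x0\<bar>" by (simp add: power2_eq_square)
  have "(sg * s * nx) * eps^2 \<le> (sg * s) * (4 * (v \<bullet> x0)^2)"
    using mult_left_mono[OF k, of "sg * s"] sg_nonneg s_pos by (simp add: mult.assoc)
  also have "\<dots> = (4 * sg * \<bar>lam\<bar>) * \<bar>v \<bullet> x0\<bar>" unfolding lam_abs sq by (simp only: mult_ac)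
  finally have k2: "(sg * s * nx) * eps^2 \<le> (4 * sg * \<bar>lam\<bar>) * \<bar>v \<bullet> x0\<bar>" .
  have p1: "0 < \<bar>v \<bullet> x0\<bar>" using vx0nz by simp
  have p2: "0 < eps^2" using eps0 by simp
  have "sg * s * nx \<le> ((4 * sg * \<bar>lam\<bar>) * \<bar>v \<bullet> x0\<bar>) / eps^2"
    by (rule mult_imp_le_div_pos[OF p2 k2])
  also have "\<dots> = ((4 * sg * \<bar>lam\<bar>) / eps^2) * \<bar>v \<bullet> x0\<bar>" by simp
  finally have "sg * s * nx / \<bar>v \<bullet> x0\<bar> \<le> (4 * sg * \<bar>lam\<bar>) / eps^2"
    by (rule mult_imp_div_pos_le[OF p1])
  thus ?thesis by (simp add: Bd_def)
qed

end

context mainctx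
begin

lemma ratio: "4 * sg / eps^2 \<le> 1 / 2"
proof -
  have p2: "0 < eps^2" using eps0 by simp
  have "4 * sg \<le> (1/2) * eps^2" using sgb by simp
  thus ?thesis using p2 by (simp add: divide_le_eq)
qed

lemma Bd_lt: "Bd < \<bar>lam\<bar>"
proof -
  have "Bd \<le> (4 * sg / eps^2) * \<bar>lam\<bar>" using Bd_rel by simp
  also have "\<dots> \<le> (1/2) * \<bar>lam\<bar>" using ratio by (intro mult_right_mono) simp_all
  finally show ?thesis using lam_pos by simp
qed

definition "qp = det (Mp g xx)"
definition "qC = map_poly complex_of_real qp"

lemma cf: "charpoly g = [:-lam, 1:] * qp" unfolding qp_def by (rule charpoly_factor[OF x1 gx])

lemma q0: "qp \<noteq> 0" using charpoly_nz[of g] cf by auto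

lemma qC0: "qC \<noteq> 0" unfolding qC_def using q0 by (simp add: map_poly_eq_0_iff)

lemma pC: "map_poly complex_of_real (charpoly g) = [:- complex_of_real lam, 1:] * qC"
  unfolding cf qC_def mpc_mult by (simp add: mpc_pCons2)

lemma proots_eq: "proots (map_poly complex_of_real (charpoly g)) = add_mset (complex_of_real lam) (proots qC)"
proof -
  have "proots ([:- complex_of_real lam, 1:] * qC) = proots [:- complex_of_real lam, 1:] + proots qC"
    by (rule proots_mult) (use qC0 in auto)
  thus ?thesis unfolding pC by simp
qed

lemma roots_small: assumes "mu \<in># proots qC" shows "cmod mu \<le> Bd"
proof -
  have "poly (map_poly complex_of_real (det (Mp g xx))) mu = 0" using assms qC0 by (simp add: qC_def qp_def)
  then obtain A B t1 t2 where "A \<bullet> xx = 0" "B \<bullet> xx = 0" "A \<noteq> 0 \<or> B \<noteq> 0"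
    "g *v A = Re mu *\<^sub>R A - Im mu *\<^sub>R B + t1 *\<^sub>R xx"
    "g *v B = Im mu *\<^sub>R A + Re mu *\<^sub>R B + t2 *\<^sub>R xx"
    by (rule root_vectors[OF x1])
  from core[OF gx vxnz this]
  have "(Re mu ^ 2 + Im mu ^ 2) * (v \<bullet> xx)^2 \<le> (sg * s)^2 * (norm xx)^2" .
  hence "(cmod mu)^2 * (v \<bullet> xx)^2 \<le> (sg * s)^2 * (norm xx)^2" by (simp only: cmod_power2)
  from gen_bound[OF this] show ?thesis by simp
qed

definition "Lm = sorted_list_of_multiset (image_mset cmod (proots qC))"

lemma Lsmall: "\<forall>t\<in>set Lm. t \<le> Bd" using roots_small by (auto simp: Lm_def)

lemma em: "eig_moduli g = \<bar>lam\<bar> # rev Lm"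
proof -
  have "image_mset cmod (proots (map_poly complex_of_real (charpoly g)))
      = add_mset \<bar>lam\<bar> (image_mset cmod (proots qC))"
    unfolding proots_eq by simp
  moreover have "insort \<bar>lam\<bar> Lm = Lm @ [\<bar>lam\<bar>]"
  proof (rule insort_max)
    show "sorted Lm" by (simp add: Lm_def)
    show "\<forall>y\<in>set Lm. y < \<bar>lam\<bar>" using Lsmall Bd_lt by fastforce
  qed
  ultimately show ?thesis unfolding eig_moduli_def by (simp add: Lm_def)
qed

lemma rho1: "rho g 1 = \<bar>lam\<bar>" by (simp add: rho_def em)

lemma rho2: "rho g 2 \<le> Bd"
proof (cases "2 \<le> length (eig_moduli g)")
  case True
  hence "Lm \<noteq> []" using em by auto
  hence "rev Lm ! 0 \<in> set Lm" by (metis length_greater_0_conv length_rev nth_mem set_rev)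
  hence "rev Lm ! 0 \<le> Bd" using Lsmall by blast
  thus ?thesis using True by (simp add: rho_def em)
next
  case False
  thus ?thesis using Bd0 by (simp add: rho_def)
qed

end

context mainctx
begin

lemma sgs: "sigma g = sg" by (simp add: sg_def)

lemma P1: "proximal g" unfolding proximal_def rho1 using rho2 Bd_lt by simp

lemma P2: "rho g 1 \<ge> eps / 2 * opnorm g"
proof -
  have "eps / 2 * opnorm g \<le> (5 * eps / 8) * s" using s_pos eps0 by (simp add: s_def)
  also have "\<dots> \<le> \<bar>v \<bullet> x0\<bar> * s" using vx0 s_pos by (intro mult_right_mono) simp_all
  also have "\<dots> = rho g 1" unfolding rho1 lam_abs by (simp only: mult.commute)
  finally show ?thesis .
qed

lemma P3: "rho g 2 / rho g 1 \<le> 4 * sigma g / eps\<^sup>2"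
proof -
  have "rho g 2 \<le> 4 * sg * \<bar>lam\<bar> / eps^2" using rho2 Bd_rel by simp
  also have "\<dots> = (4 * sg / eps^2) * \<bar>lam\<bar>" by simp
  finally have "rho g 2 \<le> (4 * sg / eps^2) * \<bar>lam\<bar>" .
  hence "rho g 2 / \<bar>lam\<bar> \<le> 4 * sg / eps^2" using lam_pos by (rule mult_imp_div_pos_le[rotated])
  thus ?thesis unfolding rho1 sgs .
qed

lemma sg_lt1: "sg^2 < 1"
proof -
  have "eps^2 \<le> 1" using eps0 eps1 by (simp add: power_le_one)
  hence "sg \<le> 1/8" using sgb by linarith
  hence "sg^2 \<le> (1/8)^2" using sg_nonneg by (intro power_mono) simp_all
  moreover have "(1/8::real)^2 = 1/64" by (simp add: power2_eq_square)
  ultimately show ?thesis by linarith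
qed

lemma U1_char:
  assumes wV: "norm (g *v w) = opnorm g * norm w"
  shows "g *v w = (s * (v \<bullet> w)) *\<^sub>R u"
proof -
  have "(norm (g *v w))^2 = (s * (v \<bullet> w))^2 + (norm (g *v perp w))^2"
    unfolding decomp[of w] by (subst norm_sum_orth_sq) (simp_all add: decomp_orth u1)
  moreover have "(norm (g *v w))^2 = s^2 * ((v \<bullet> w)^2 + (norm (perp w))^2)"
    using wV perp_norm_sq[of w] by (simp add: s_def power_mult_distrib)
  ultimately have e: "(norm (g *v perp w))^2 = s^2 * (norm (perp w))^2"
    by (simp add: power_mult_distrib algebra_simps)
  have "(norm (g *v perp w))^2 \<le> (sg * s * norm (perp w))^2"
    using decomp_small[of w] by (intro power_mono) simp_all
  hence h1: "s^2 * (norm (perp w))^2 \<le> sg^2 * (s^2 * (norm (perp w))^2)"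
    unfolding e by (simp add: power_mult_distrib algebra_simps)
  define Z where "Z = s^2 * (norm (perp w))^2"
  have "(1 - sg^2) * Z \<le> 0" using h1 unfolding Z_def by (simp add: algebra_simps)
  moreover have "0 < 1 - sg^2" using sg_lt1 by simp
  ultimately have "Z \<le> 0" by (simp add: mult_le_0_iff)
  hence "perp w = 0" using s_pos unfolding Z_def by (simp add: mult_le_0_iff)
  thus ?thesis using decomp[of w] by simp
qed

lemma Eplus_char:
  assumes gw: "g *v w = c' *\<^sub>R w" and c': "\<bar>c'\<bar> = \<bar>lam\<bar>"
  shows "w = (xx \<bullet> w) *\<^sub>R xx"
proof (rule ccontr)
  assume ne: "w \<noteq> (xx \<bullet> w) *\<^sub>R xx"
  define a where "a = w - (xx \<bullet> w) *\<^sub>R xx"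
  have xxx: "xx \<bullet> xx = 1" using x1 by (metis power2_norm_eq_inner one_power2)
  have ax: "a \<bullet> xx = 0" by (simp add: a_def inner_diff_left inner_diff_right xxx inner_commute)
  have a0: "a \<noteq> 0" using ne by (simp add: a_def)
  have ga: "g *v a = c' *\<^sub>R a - 0 *\<^sub>R (0::real^'n) + (c' * (xx \<bullet> w) - (xx \<bullet> w) * lam) *\<^sub>R xx"
    by (simp add: a_def matrix_vector_mult_diff_distrib matrix_vector_mult_scaleR gw gx algebra_simps)
  have gb: "g *v (0::real^'n) = 0 *\<^sub>R a + c' *\<^sub>R 0 + 0 *\<^sub>R xx" by simp
  have "(c'^2 + 0^2) * (v \<bullet> xx)^2 \<le> (sg * s)^2 * (norm xx)^2"
    by (rule core[OF gx vxnz ax _ _ ga gb]) (simp_all add: a0)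
  hence "c'^2 * (v \<bullet> xx)^2 \<le> (sg * s)^2 * (norm xx)^2" by simp
  hence "\<bar>c'\<bar> \<le> Bd" by (rule gen_bound)
  thus False using c' Bd_lt by simp
qed

lemma pdist_ux0: "pdist u x0 = norm yv / nx"
proof -
  have ux: "u \<bullet> x0 = 1" by (simp add: x0_def inner_add_right uu yv(2))
  have "wnorm (vwedge u x0) = sqrt (nx^2 - 1)"
    by (simp add: wnorm_vwedge u1 ux nx_def)
  also have "\<dots> = norm yv" using nx2 by simp
  finally show ?thesis by (simp add: pdist_def u1 nx_def)
qed

lemma P4: assumes u': "u' \<in> U1 g - {0}" and v': "v' \<in> Eplus g - {0}"
  shows "pdist u' v' \<le> 2 * sigma g / eps"
proof -
  obtain w where uw: "u' = g *v w" and wV: "norm (g *v w) = opnorm g * norm w" and u'0: "u' \<noteq> 0"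
    using u' by (auto simp: U1_def V1_def)
  have gw: "g *v w = (s * (v \<bullet> w)) *\<^sub>R u" by (rule U1_char[OF wV])
  have a0: "s * (v \<bullet> w) \<noteq> 0" using u'0 uw gw by auto
  obtain c' where c'1: "\<bar>c'\<bar> = rho g 1" and c'2: "g *v v' = c' *\<^sub>R v'" and v'0: "v' \<noteq> 0"
    using v' by (auto simp: Eplus_def)
  have v'x: "v' = (xx \<bullet> v') *\<^sub>R xx" by (rule Eplus_char[OF c'2]) (use c'1 rho1 in simp)
  have k0: "xx \<bullet> v' \<noteq> 0" using v'x v'0 by (metis scale_zero_left)
  have "pdist u' v' = pdist ((s * (v \<bullet> w)) *\<^sub>R u) ((xx \<bullet> v') *\<^sub>R ((1 / nx) *\<^sub>R x0))"
    using uw gw v'x by (simp add: xx_def)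
  also have "\<dots> = pdist ((s * (v \<bullet> w)) *\<^sub>R u) (((xx \<bullet> v') * (1 / nx)) *\<^sub>R x0)" by simp
  also have "\<dots> = pdist u x0" using a0 k0 nx1 by (intro pdist_scale) auto
  also have "\<dots> = norm yv / nx" by (rule pdist_ux0)
  also have "\<dots> \<le> norm yv"
  proof -
    have "norm yv \<le> norm yv * nx" using nx1 by (simp add: mult_le_cancel_left1)
    thus ?thesis using nx1 by (simp add: divide_le_eq)
  qed
  also have "\<dots> \<le> 2 * sigma g / eps" using yv(1) by (simp add: r_def sgs)
  finally show ?thesis .
qed

lemma main_result:
  shows "proximal g
    \<and> rho g 1 \<ge> eps / 2 * opnorm g
    \<and> rho g 2 / rho g 1 \<le> 4 * sigma g / eps\<^sup>2
    \<and> (\<forall>u' \<in> U1 g - {0}. \<forall>v' \<in> Eplus g - {0}. pdist u' v' \<le> 2 * sigma g / eps)"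
  using P1 P2 P3 P4 by blast

end

theorem lemma2p17:
  fixes g :: "real^'n^'n" and eps :: real
  assumes "0 < eps" "eps \<le> 1" "g \<noteq> 0"
    and "sigma g \<le> eps\<^sup>2 / 8"
    and "aligned g eps g"
  shows "proximal g
    \<and> rho g 1 \<ge> eps / 2 * opnorm g
    \<and> rho g 2 / rho g 1 \<le> 4 * sigma g / eps\<^sup>2
    \<and> (\<forall>u \<in> U1 g - {0}. \<forall>v \<in> Eplus g - {0}. pdist u v \<le> 2 * sigma g / eps)"
proof -
  obtain v where v1: "norm v = 1" and vmax: "norm (g *v v) = opnorm g"
    using opnorm_attained[of g] by blast
  interpret topsv g v by unfold_locales (use assms(3) v1 vmax in auto)
  interpret mainctx g v eps
    by unfold_locales (use assms in \<open>simp_all add: sg_def\<close>)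
  show ?thesis by (rule main_result)
qed

end
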